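(* Let $\mathcal{X}$ be a finite set, $\pi$ a probability distribution on $\mathcal{X}$ with $\pi(x)>0$ for all $x$, $p>1$, $\alpha>0$, and $\mathcal{N}$ a symmetric neighborhood mapping on $\mathcal{X}$ (with $x\notin\mathcal{N}(x)$) such that $\max_{x}|\mathcal{N}(x)|\le p^\alpha$. Suppose there exist $x^*\in\mathcal{X}$, an operator $\mathsf{T}\colon\mathcal{X}\to\mathcal{X}$ and a constant $\nu>\alpha$ such that $\mathsf{T}(x^* )=x^*$ and for every $x\neq x^*$, $\mathsf{T}(x)\in\mathcal{N}(x)$ and $\pi(\mathsf{T}(x))\ge p^\nu\pi(x)$ (Assumption 1). Then for any transition matrix $P$ on $\mathcal{X}$ that is irreducible and reversible with respect to $\pi$, $$\mathrm{Gap}(P)\ge\kappa(p,\alpha,\nu)\min_{x\neq x^*}P(x,\mathsf{T}(x)),\qquad \kappa(p,\alpha,\nu)=\tfrac12\{1-p^{-(\nu-\alpha)/2}\}^3,$$ and for any transition rate matrix $Q$ on $\mathcal{X}$ that is irreducible and reversible with respect to $\pi$, $\mathrm{Gap}(Q)\ge\kappa(p,\alpha,\nu)\min_{x\neq x^*}Q(x,\mathsf{T}(x))$.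
   Context: For an irreducible reversible transition matrix $P$ with eigenvalues $1=\lambda_1(P)>\lambda_2(P)\ge\cdots$, $\mathrm{Gap}(P)=1-\lambda_2(P)$. For an irreducible reversible transition rate matrix $Q$ with eigenvalues $0=\lambda_1(Q)>\lambda_2(Q)\ge\cdots$, $\mathrm{Gap}(Q)=-\lambda_2(Q)$. *)

theory Defs
  imports "HOL-Analysis.Analysis" "HOL-Computational_Algebra.Polynomial"
begin


definition charpoly :: "('x::finite \<Rightarrow> 'x \<Rightarrow> real) \<Rightarrow> real poly" where
  "charpoly M = det (\<chi> i j. (if i = j then [:0, 1:] else 0) - [:M i j:])"

text \<open>Real eigenvalues (with algebraic multiplicity), in non-increasing order:
  lambda_1 \<ge> lambda_2 \<ge> ... .  For reversible matrices all eigenvalues are real.\<close>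
definition eigenvalues_desc :: "('x::finite \<Rightarrow> 'x \<Rightarrow> real) \<Rightarrow> real list" where
  "eigenvalues_desc M = rev (sorted_list_of_multiset (proots (charpoly M)))"

definition lambda2 :: "('x::finite \<Rightarrow> 'x \<Rightarrow> real) \<Rightarrow> real" where
  "lambda2 M = eigenvalues_desc M ! 1"

definition Gap_P :: "('x::finite \<Rightarrow> 'x \<Rightarrow> real) \<Rightarrow> real" where
  "Gap_P P = 1 - lambda2 P"

definition Gap_Q :: "('x::finite \<Rightarrow> 'x \<Rightarrow> real) \<Rightarrow> real" where
  "Gap_Q Q = - lambda2 Q"

definition prob_dist :: "('x::finite \<Rightarrow> real) \<Rightarrow> bool" where
  "prob_dist \<pi> \<longleftrightarrow> (\<forall>x. \<pi> x \<ge> 0) \<and> (\<Sum>x\<in>UNIV. \<pi> x) = 1"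

definition transition_matrix :: "('x::finite \<Rightarrow> 'x \<Rightarrow> real) \<Rightarrow> bool" where
  "transition_matrix P \<longleftrightarrow> (\<forall>x y. P x y \<ge> 0) \<and> (\<forall>x. (\<Sum>y\<in>UNIV. P x y) = 1)"

definition rate_matrix :: "('x::finite \<Rightarrow> 'x \<Rightarrow> real) \<Rightarrow> bool" where
  "rate_matrix Q \<longleftrightarrow> (\<forall>x y. x \<noteq> y \<longrightarrow> Q x y \<ge> 0) \<and> (\<forall>x. (\<Sum>y\<in>UNIV. Q x y) = 0)"

definition irreducible_mat :: "('x \<Rightarrow> 'x \<Rightarrow> real) \<Rightarrow> bool" where
  "irreducible_mat M \<longleftrightarrow> (\<forall>x y. (x, y) \<in> {(a, b). a \<noteq> b \<and> M a b > 0}\<^sup>*)"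

definition reversible_wrt :: "('x \<Rightarrow> real) \<Rightarrow> ('x \<Rightarrow> 'x \<Rightarrow> real) \<Rightarrow> bool" where
  "reversible_wrt \<pi> M \<longleftrightarrow> (\<forall>x y. \<pi> x * M x y = \<pi> y * M y x)"

definition symmetric_nbhd :: "('x \<Rightarrow> 'x set) \<Rightarrow> bool" where
  "symmetric_nbhd N \<longleftrightarrow> (\<forall>x y. y \<in> N x \<longleftrightarrow> x \<in> N y) \<and> (\<forall>x. x \<notin> N x)"

definition kappa :: "real \<Rightarrow> real \<Rightarrow> real \<Rightarrow> real" where
  "kappa p \<alpha> \<nu> = (1/2) * (1 - p powr (-(\<nu> - \<alpha>) / 2)) ^ 3"

end

theory Submission
  imports Defs "HOL-Computational_Algebra.Fundamental_Theorem_Algebra"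
begin

lemma poly_ent: "poly (if i = j then [:0, 1:] else 0) (t::real) = (if i = j then t else 0)"
  by simp

lemma charpoly_eval: "poly (charpoly M) t = det (\<chi> i j. (if i = j then t else 0) - M i j)"
  unfolding charpoly_def det_def by (simp add: poly_sum poly_prod poly_ent)

lemma mp_add: "map_poly (of_real::real\<Rightarrow>complex) (p + q) = map_poly of_real p + map_poly of_real q"
  by (simp add: poly_eq_iff coeff_map_poly)

lemma mp_mult: "map_poly (of_real::real\<Rightarrow>complex) (p * q) = map_poly of_real p * map_poly of_real q"
  by (simp add: poly_eq_iff coeff_map_poly coeff_mult)

lemma mp_sum: "map_poly (of_real::real\<Rightarrow>complex) (sum f S) = (\<Sum>x\<in>S. map_poly of_real (f x))"
  by (induction S rule: infinite_finite_induct) (auto simp: mp_add)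

lemma mp_prod: "map_poly (of_real::real\<Rightarrow>complex) (prod f S) = (\<Prod>x\<in>S. map_poly of_real (f x))"
  by (induction S rule: infinite_finite_induct) (auto simp: mp_mult)

lemma mp_of_int: "map_poly (of_real::real\<Rightarrow>complex) (of_int k) = of_int k"
  by (simp add: of_int_poly map_poly_pCons)

lemma mp_eval_real: "poly (map_poly (of_real::real\<Rightarrow>complex) p) (of_real x) = of_real (poly p x)"
  by (induction p) (auto simp: map_poly_pCons)

lemma poly_ent_c: "poly (map_poly complex_of_real ((if i = j then [:0, 1:] else 0) - [:c:])) t
   = (if i = j then t else 0) - complex_of_real c"
  by (cases "i = j") (simp_all add: poly_diff map_poly_pCons)

lemma charpoly_eval_c: "poly (map_poly of_real (charpoly M)) z
   = det (\<chi> i j. (if i = j then z else 0) - complex_of_real (M i j))"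
  unfolding charpoly_def det_def
  by (simp add: mp_sum mp_mult mp_prod mp_of_int poly_sum poly_prod poly_ent_c)

lemma det0_eigvec:
  fixes B :: "'a::field^'n^'n"
  assumes "det B = 0" shows "\<exists>v. v \<noteq> 0 \<and> B *v v = 0"
proof -
  have "\<not> inj ((*v) B)" using det_nz_iff_inj_gen[of "(*v) B"] assms by simp
  then obtain x y where "x \<noteq> y" "B *v x = B *v y" unfolding inj_def by blast
  then show ?thesis by (intro exI[of _ "x - y"]) (simp add: matrix_vector_mult_diff_distrib)
qed


lemma eig_real:
  fixes A :: "'x::finite \<Rightarrow> 'x \<Rightarrow> real" and \<pi> :: "'x \<Rightarrow> real"
  assumes rev: "reversible_wrt \<pi> A" and pos: "\<forall>x. \<pi> x > 0"
    and root: "poly (map_poly of_real (charpoly A)) z = 0"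
  shows "Im z = 0"
proof -
  let ?B = "(\<chi> i j. (if i = j then z else 0) - complex_of_real (A i j)) :: complex^'x^'x"
  have "det ?B = 0" using root charpoly_eval_c[of A z] by simp
  then obtain v where v0: "v \<noteq> 0" and vB: "?B *v v = 0" using det0_eigvec by blast
  have ev: "(\<Sum>y\<in>UNIV. of_real (A x y) * v$y) = z * v$x" for x
  proof -
    have h: "(\<Sum>y\<in>UNIV. (if x = y then z else 0) * v$y) = z * v$x"
    proof -
      have "(\<Sum>y\<in>UNIV. (if x = y then z else 0) * v$y) = (\<Sum>y\<in>UNIV. (if x = y then z * v$y else 0))"
        by (intro sum.cong) auto
      then show ?thesis by simp
    qed
    have "0 = (?B *v v)$x" using vB by simp
    also have "\<dots> = (\<Sum>y\<in>UNIV. ((if x = y then z else 0) - of_real (A x y)) * v$y)"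
      by (simp add: matrix_vector_mult_def)
    also have "\<dots> = (\<Sum>y\<in>UNIV. (if x = y then z else 0) * v$y) - (\<Sum>y\<in>UNIV. of_real (A x y) * v$y)"
      by (simp only: left_diff_distrib sum_subtractf)
    finally show ?thesis using h by simp
  qed
  define L where "L = (\<Sum>x\<in>UNIV. \<Sum>y\<in>UNIV. of_real (\<pi> x * A x y) * cnj (v$x) * v$y)"
  have L1: "L = z * of_real (\<Sum>x\<in>UNIV. \<pi> x * ((Re (v$x))\<^sup>2 + (Im (v$x))\<^sup>2))"
  proof -
    have "L = (\<Sum>x\<in>UNIV. of_real (\<pi> x) * cnj (v$x) * (\<Sum>y\<in>UNIV. of_real (A x y) * v$y))"
      unfolding L_def by (simp add: sum_distrib_left mult.assoc mult.left_commute)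
    also have "\<dots> = (\<Sum>x\<in>UNIV. z * (of_real (\<pi> x) * (v$x * cnj (v$x))))"
      by (simp only: ev) (simp add: mult_ac)
    also have "\<dots> = z * of_real (\<Sum>x\<in>UNIV. \<pi> x * ((Re (v$x))\<^sup>2 + (Im (v$x))\<^sup>2))"
      by (simp add: complex_mult_cnj sum_distrib_left)
    finally show ?thesis .
  qed
  have "cnj L = (\<Sum>x\<in>UNIV. \<Sum>y\<in>UNIV. of_real (\<pi> x * A x y) * v$x * cnj (v$y))"
    unfolding L_def by simp
  also have "\<dots> = (\<Sum>y\<in>UNIV. \<Sum>x\<in>UNIV. of_real (\<pi> x * A x y) * v$x * cnj (v$y))"
    by (rule sum.swap)
  also have "\<dots> = L"
    unfolding L_def using rev unfolding reversible_wrt_def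
    by (intro sum.cong refl) (simp add: mult.commute mult.left_commute)
  finally have "cnj L = L" .
  then have ImL: "Im L = 0" by (metis cnj.simps(2) complex_cnj_cnj add.inverse_neutral neg_equal_zero) 
  have Rpos: "(\<Sum>x\<in>UNIV. \<pi> x * ((Re (v$x))\<^sup>2 + (Im (v$x))\<^sup>2)) > 0"
  proof -
    obtain x0 where "v$x0 \<noteq> 0" using v0 by (metis vec_eq_iff zero_index)
    then have "(Re (v$x0))\<^sup>2 + (Im (v$x0))\<^sup>2 > 0" by (simp add: complex_eq_iff sum_power2_gt_zero_iff)
    then have "\<pi> x0 * ((Re (v$x0))\<^sup>2 + (Im (v$x0))\<^sup>2) > 0" using pos by simp
    moreover have "\<pi> x0 * ((Re (v$x0))\<^sup>2 + (Im (v$x0))\<^sup>2) \<le> (\<Sum>x\<in>UNIV. \<pi> x * ((Re (v$x))\<^sup>2 + (Im (v$x))\<^sup>2))"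
      by (rule member_le_sum) (use pos in \<open>auto intro!: mult_nonneg_nonneg add_nonneg_nonneg simp: less_imp_le\<close>)
    ultimately show ?thesis by linarith
  qed
  from ImL L1 have "Im z * (\<Sum>x\<in>UNIV. \<pi> x * ((Re (v$x))\<^sup>2 + (Im (v$x))\<^sup>2)) = 0" by simp
  with Rpos show ?thesis by simp
qed

lemma split_real:
  fixes p :: "real poly"
  assumes "p \<noteq> 0" "\<forall>z. poly (map_poly of_real p) z = 0 \<longrightarrow> Im z = 0"
  shows "size (proots p) = degree p"
  using assms
proof (induction "degree p" arbitrary: p)
  case 0
  then show ?case using size_proots_le[of p] by simp
next
  case (Suc n)
  have "degree (map_poly (of_real::real\<Rightarrow>complex) p) = degree p"
    by (simp add: degree_map_poly)
  then have "\<not> constant (poly (map_poly (of_real::real\<Rightarrow>complex) p))"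
    using Suc.hyps(2) constant_degree by (metis nat.simps(3))
  then obtain z where z: "poly (map_poly (of_real::real\<Rightarrow>complex) p) z = 0"
    using fundamental_theorem_of_algebra by blast
  then have "Im z = 0" using Suc.prems by blast
  then have "z = of_real (Re z)" by (simp add: complex_eq_iff)
  then have "poly p (Re z) = 0" using z mp_eval_real[of p "Re z"] by simp
  then obtain q where q: "p = [:- Re z, 1:] * q" using poly_eq_0_iff_dvd by blast
  have q0: "q \<noteq> 0" using q Suc.prems by auto
  have "degree p = degree [:- Re z, 1:] + degree q" using q0 unfolding q by (subst degree_mult_eq) auto
  then have dq: "degree q = n" using Suc.hyps(2) by simp
  have "\<forall>w. poly (map_poly of_real q) w = 0 \<longrightarrow> Im w = 0"
  proof (intro allI impI)
    fix w assume "poly (map_poly (of_real::real\<Rightarrow>complex) q) w = 0"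
    then have "poly (map_poly (of_real::real\<Rightarrow>complex) p) w = 0" unfolding q mp_mult by simp
    then show "Im w = 0" using Suc.prems by blast
  qed
  then have "size (proots q) = n" using Suc.hyps(1)[of q] dq q0 by simp
  moreover have "size (proots p) = 1 + size (proots q)" unfolding q using q0 by (subst proots_mult) auto
  ultimately show ?case using Suc.hyps(2) by simp
qed


lemma charpoly_coeff_top: "coeff (charpoly (M::'x::finite \<Rightarrow> 'x \<Rightarrow> real)) CARD('x) = 1"
proof -
  define E :: "'x \<Rightarrow> 'x \<Rightarrow> real poly" where "E = (\<lambda>i j. (if i = j then [:0, 1:] else 0) - [:M i j:])"
  define t where "t = (\<lambda>\<sigma>::'x\<Rightarrow>'x. of_int (sign \<sigma>) * (\<Prod>i\<in>UNIV. E i (\<sigma> i)))"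
  have cp: "charpoly M = (\<Sum>\<sigma>\<in>{\<sigma>. \<sigma> permutes UNIV}. t \<sigma>)"
    unfolding charpoly_def det_def t_def E_def by simp
  have degE: "degree (E i j) \<le> (if j = i then 1 else 0)" for i j
    unfolding E_def by (cases "i = j") (auto intro: order.trans[OF degree_diff_le])
  have other: "coeff (t \<sigma>) CARD('x) = 0" if ne: "\<sigma> \<noteq> id" for \<sigma>
  proof -
    obtain i0 where i0: "\<sigma> i0 \<noteq> i0" using ne by (metis eq_id_iff)
    have "degree (\<Prod>i\<in>UNIV. E i (\<sigma> i)) \<le> (\<Sum>i\<in>UNIV. degree (E i (\<sigma> i)))"
      using degree_prod_sum_le[of UNIV "\<lambda>i. E i (\<sigma> i)"] by (simp add: o_def)
    also have "\<dots> \<le> (\<Sum>i\<in>UNIV. (if \<sigma> i = i then 1 else 0))"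
      by (intro sum_mono degE)
    also have "\<dots> < (\<Sum>i\<in>(UNIV::'x set). 1)"
      by (rule sum_strict_mono_ex1) (use i0 in auto)
    finally have d: "degree (\<Prod>i\<in>UNIV. E i (\<sigma> i)) < CARD('x)" by simp
    have "degree (t \<sigma>) \<le> degree (\<Prod>i\<in>UNIV. E i (\<sigma> i))"
      unfolding t_def using degree_mult_le[of "of_int (sign \<sigma>)" "\<Prod>i\<in>UNIV. E i (\<sigma> i)"] by simp
    with d show ?thesis by (intro coeff_eq_0) simp
  qed
  have Eii: "E i i = [:- M i i, 1:]" for i unfolding E_def by simp
  have idt: "coeff (t id) CARD('x) = 1"
  proof -
    have "t id = (\<Prod>i\<in>UNIV. [:- M i i, 1:])" unfolding t_def by (simp add: Eii)
    moreover have "degree (\<Prod>i\<in>(UNIV::'x set). [:- M i i, 1:]) = CARD('x)"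
      by (subst degree_prod_eq_sum_degree) auto
    moreover have "lead_coeff (\<Prod>i\<in>(UNIV::'x set). [:- M i i, 1:]) = 1"
      by (simp add: lead_coeff_prod)
    ultimately show ?thesis by simp
  qed
  have "coeff (charpoly M) CARD('x) = (\<Sum>\<sigma>\<in>{\<sigma>. \<sigma> permutes UNIV}. coeff (t \<sigma>) CARD('x))"
    unfolding cp by (simp add: coeff_sum)
  also have "\<dots> = coeff (t id) CARD('x) + (\<Sum>\<sigma>\<in>{\<sigma>. \<sigma> permutes UNIV} - {id}. coeff (t \<sigma>) CARD('x))"
    by (subst sum.remove[of _ id]) (auto simp: permutes_id)
  also have "\<dots> = 1" using idt other by simp
  finally show ?thesis .
qed

lemma charpoly_nz_deg: "charpoly (M::'x::finite \<Rightarrow> 'x \<Rightarrow> real) \<noteq> 0 \<and> CARD('x) \<le> degree (charpoly M)"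
  using charpoly_coeff_top[of M] le_degree[of "charpoly M" "CARD('x)"] by auto


lemma det_col_id:
  fixes g :: "'n::finite \<Rightarrow> real"
  shows "det ((\<chi> i j. if j = j0 then g i else (if i = j then 1 else 0)) :: real^'n^'n) = g j0"
proof -
  define A0 :: "real^'n^'n" where "A0 = (\<chi> i. if i = j0 then g j0 *s axis i 1 else axis i 1)"
  define x :: "real^'n" where "x = (\<Sum>k\<in>UNIV - {j0}. g k *s axis k 1)"
  have rows: "row j A0 = axis j 1" if "j \<noteq> j0" for j
    using that unfolding A0_def row_def by (simp add: vec_eq_iff)
  have "x \<in> vec.span {row j A0 |j. j \<noteq> j0}"
    unfolding x_def
  proof (intro vec.span_sum vec.span_scale vec.span_base)
    fix k assume "k \<in> UNIV - {j0}"
    then have "k \<noteq> j0" by simp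
    then show "axis k 1 \<in> {row j A0 |j. j \<noteq> j0}" using rows[of k] by (metis (mono_tags, lifting) mem_Collect_eq)
  qed
  then have e: "det (\<chi> k. if k = j0 then row j0 A0 + x else row k A0) = det A0"
    by (rule det_row_span)
  have m: "(\<chi> k. if k = j0 then row j0 A0 + x else row k A0) =
     transpose ((\<chi> i j. if j = j0 then g i else (if i = j then 1 else 0)) :: real^'n^'n)"
  proof -
    have "(row j0 A0 + x)$j = g j" for j
    proof (cases "j = j0")
      case True
      then show ?thesis unfolding A0_def x_def row_def by (simp add: sum_component axis_def)
    next
      case False
      have "(\<Sum>k\<in>UNIV - {j0}. g k * (if j = k then 1 else 0)) = (\<Sum>k\<in>UNIV - {j0}. if k = j then g k else 0)"
        by (intro sum.cong) auto
      also have "\<dots> = g j" using False by (simp add: sum.delta)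
      finally show ?thesis using False unfolding A0_def x_def row_def by (simp add: sum_component axis_def)
    qed
    then show ?thesis unfolding A0_def transpose_def row_def by (simp add: vec_eq_iff axis_def)
  qed
  have "det A0 = g j0 * det (mat 1 :: real^'n^'n)"
  proof -
    have "det A0 = g j0 * det ((\<chi> i. if i = j0 then axis i 1 else axis i 1) :: real^'n^'n)"
      unfolding A0_def by (rule det_row_mul)
    moreover have "((\<chi> i. if i = j0 then axis i 1 else axis i 1) :: real^'n^'n) = mat 1"
      by (simp add: vec_eq_iff axis_def mat_def)
    ultimately show ?thesis by simp
  qed
  then show ?thesis using e m by simp
qed

lemma det_rowsum:
  fixes Y :: "real^'n::finite^'n"
  assumes rs: "\<forall>i. (\<Sum>j\<in>UNIV. Y$i$j) = r"
  shows "det Y = r * det ((\<chi> i j. if j = j0 then 1 else Y$i$j) :: real^'n^'n)"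
proof -
  define Z :: "real^'n^'n" where "Z = (\<chi> i j. if j = j0 then 1 else Y$i$j)"
  define G :: "real^'n^'n" where "G = (\<chi> k j. if j = j0 then (if k = j0 then r else -1) else (if k = j then 1 else 0))"
  have "Z ** G = Y"
  proof -
    have "(Z ** G)$i$j = Y$i$j" for i j
    proof (cases "j = j0")
      case True
      have "(Z ** G)$i$j = (\<Sum>k\<in>UNIV. Z$i$k * G$k$j)" by (simp add: matrix_matrix_mult_def)
      also have "\<dots> = Z$i$j0 * G$j0$j + (\<Sum>k\<in>UNIV - {j0}. Z$i$k * G$k$j)"
        by (subst sum.remove[of _ j0]) auto
      also have "\<dots> = r - (\<Sum>k\<in>UNIV - {j0}. Y$i$k)"
        using True unfolding Z_def G_def by (simp add: sum_negf)
      also have "\<dots> = Y$i$j0"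
        using rs sum.remove[of UNIV j0 "\<lambda>k. Y$i$k"] by simp
      finally show ?thesis using True by simp
    next
      case False
      have "(Z ** G)$i$j = (\<Sum>k\<in>UNIV. Z$i$k * G$k$j)" by (simp add: matrix_matrix_mult_def)
      also have "\<dots> = (\<Sum>k\<in>UNIV. if k = j then Z$i$k else 0)"
        using False unfolding G_def by (intro sum.cong) auto
      also have "\<dots> = Y$i$j" using False unfolding Z_def by simp
      finally show ?thesis .
    qed
    then show ?thesis by (simp add: vec_eq_iff)
  qed
  moreover have "det G = r"
    unfolding G_def using det_col_id[of j0 "\<lambda>k. if k = j0 then r else -1"] by simp
  ultimately show ?thesis unfolding Z_def by (metis det_mul mult.commute)
qed

lemma det_deflate:
  fixes A :: "'n::finite \<Rightarrow> 'n \<Rightarrow> real" and b :: "'n \<Rightarrow> real"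
  assumes rs: "\<forall>x. (\<Sum>y\<in>UNIV. A x y) = \<mu>" and bs: "(\<Sum>y\<in>UNIV. b y) = a"
  shows "(t - \<mu>) * det ((\<chi> i j. (if i = j then t else 0) - (A i j + b j)) :: real^'n^'n)
       = (t - \<mu> - a) * det ((\<chi> i j. (if i = j then t else 0) - A i j) :: real^'n^'n)"
proof -
  obtain j0 :: 'n where True by simp
  define M :: "real^'n^'n" where "M = (\<chi> i j. (if i = j then t else 0) - A i j)"
  define X :: "real^'n^'n" where "X = (\<chi> i j. (if i = j then t else 0) - (A i j + b j))"
  have dif: "(\<Sum>j\<in>UNIV. (if i = j then t else 0) - A i j) = t - \<mu>" for i
    using rs by (simp add: sum_subtractf)
  have rM: "\<forall>i. (\<Sum>j\<in>UNIV. M$i$j) = t - \<mu>" unfolding M_def using dif by simp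
  have rX: "\<forall>i. (\<Sum>j\<in>UNIV. X$i$j) = t - \<mu> - a"
  proof
    fix i
    have "(\<Sum>j\<in>UNIV. X$i$j) = (\<Sum>j\<in>UNIV. ((if i = j then t else 0) - A i j) - b j)"
      unfolding X_def by (simp add: algebra_simps)
    also have "\<dots> = t - \<mu> - a" using dif bs by (simp only: sum_subtractf)
    finally show "(\<Sum>j\<in>UNIV. X$i$j) = t - \<mu> - a" .
  qed
  define ZM :: "real^'n^'n" where "ZM = (\<chi> i j. if j = j0 then 1 else M$i$j)"
  define ZX :: "real^'n^'n" where "ZX = (\<chi> i j. if j = j0 then 1 else X$i$j)"
  define K :: "real^'n^'n" where "K = (\<chi> k j. if k = j0 then (if j = j0 then 1 else - b j) else (if k = j then 1 else 0))"
  have "ZM ** K = ZX"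
  proof -
    have "(ZM ** K)$i$j = ZX$i$j" for i j
    proof -
      have "(ZM ** K)$i$j = (\<Sum>k\<in>UNIV. ZM$i$k * K$k$j)" by (simp add: matrix_matrix_mult_def)
      also have "\<dots> = ZM$i$j0 * K$j0$j + (\<Sum>k\<in>UNIV - {j0}. ZM$i$k * K$k$j)"
        by (subst sum.remove[of _ j0]) auto
      also have "(\<Sum>k\<in>UNIV - {j0}. ZM$i$k * K$k$j) = (\<Sum>k\<in>UNIV - {j0}. if k = j then ZM$i$k else 0)"
        unfolding K_def by (intro sum.cong) auto
      finally show ?thesis unfolding ZM_def ZX_def K_def M_def X_def by (cases "j = j0") auto
    qed
    then show ?thesis by (simp add: vec_eq_iff)
  qed
  moreover have "det K = 1"
  proof -
    have "transpose K = (\<chi> i j. if j = j0 then (if i = j0 then 1 else - b i) else (if i = j then 1 else 0))"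
      unfolding K_def transpose_def by (simp add: vec_eq_iff)
    then have "det (transpose K) = 1"
      using det_col_id[of j0 "\<lambda>i. if i = j0 then 1 else - b i"] by simp
    then show ?thesis by simp
  qed
  ultimately have "det ZX = det ZM" by (metis det_mul mult_1_right)
  moreover have "det X = (t - \<mu> - a) * det ZX" unfolding ZX_def by (rule det_rowsum[OF rX])
  moreover have "det M = (t - \<mu>) * det ZM" unfolding ZM_def by (rule det_rowsum[OF rM])
  ultimately show ?thesis unfolding M_def[symmetric] X_def[symmetric] by simp
qed


lemma real_eigvec:
  fixes B :: "'x::finite \<Rightarrow> 'x \<Rightarrow> real"
  assumes "poly (charpoly B) r = 0"
  shows "\<exists>f. (\<exists>x. f x \<noteq> 0) \<and> (\<forall>x. (\<Sum>y\<in>UNIV. B x y * f y) = r * f x)"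
proof -
  let ?B = "(\<chi> i j. (if i = j then r else 0) - B i j) :: real^'x^'x"
  have "det ?B = 0" using assms charpoly_eval[of B r] by simp
  then obtain v where v0: "v \<noteq> 0" and vB: "?B *v v = 0" using det0_eigvec by blast
  have ev: "(\<Sum>y\<in>UNIV. B x y * v$y) = r * v$x" for x
  proof -
    have h: "(\<Sum>y\<in>UNIV. (if x = y then r else 0) * v$y) = r * v$x"
    proof -
      have "(\<Sum>y\<in>UNIV. (if x = y then r else 0) * v$y) = (\<Sum>y\<in>UNIV. (if x = y then r * v$y else 0))"
        by (intro sum.cong) auto
      then show ?thesis by simp
    qed
    have "0 = (?B *v v)$x" using vB by simp
    also have "\<dots> = (\<Sum>y\<in>UNIV. ((if x = y then r else 0) - B x y) * v$y)"
      by (simp add: matrix_vector_mult_def)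
    also have "\<dots> = (\<Sum>y\<in>UNIV. (if x = y then r else 0) * v$y) - (\<Sum>y\<in>UNIV. B x y * v$y)"
      by (simp only: left_diff_distrib sum_subtractf)
    finally show ?thesis using h by simp
  qed
  obtain x0 where "v$x0 \<noteq> 0" using v0 by (metis vec_eq_iff zero_index)
  then show ?thesis using ev by (intro exI[of _ "\<lambda>x. v$x"]) auto
qed

context
  fixes \<pi> :: "'x::finite \<Rightarrow> real"
    and p \<alpha> \<nu> :: real
    and N :: "'x \<Rightarrow> 'x set"
    and xstar :: 'x
    and T :: "'x \<Rightarrow> 'x"
  assumes pi_pos: "\<forall>x. \<pi> x > 0"
    and p_gt: "p > 1"
    and alpha_pos: "\<alpha> > 0"
    and N_sym: "symmetric_nbhd N"
    and N_card: "\<forall>x. real (card (N x)) \<le> p powr \<alpha>"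
    and nu_gt: "\<nu> > \<alpha>"
    and T_fix: "T xstar = xstar"
    and T_nbhd: "\<forall>x. x \<noteq> xstar \<longrightarrow> T x \<in> N x"
    and T_incr: "\<forall>x. x \<noteq> xstar \<longrightarrow> \<pi> (T x) \<ge> p powr \<nu> * \<pi> x"
begin

definition qq :: real where "qq = p powr (-(\<nu> - \<alpha>) / 2)"

lemma qq_pos: "qq > 0" unfolding qq_def using p_gt by simp

lemma qq_lt1: "qq < 1" unfolding qq_def using p_gt nu_gt by (simp add: powr_less_one)

lemma qq_sq: "qq\<^sup>2 = p powr \<alpha> / p powr \<nu>"
proof -
  have "qq\<^sup>2 = p powr ((-(\<nu> - \<alpha>) / 2) + (-(\<nu> - \<alpha>) / 2))"
    unfolding qq_def power2_eq_square by (rule powr_add[symmetric])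
  also have "\<dots> = p powr (\<alpha> - \<nu>)" by simp
  also have "\<dots> = p powr \<alpha> / p powr \<nu>" by (simp add: powr_diff)
  finally show ?thesis .
qed

lemma step_bound:
  assumes hnn: "\<forall>y. h y \<ge> 0" and h0: "h xstar = 0"
  shows "(\<Sum>x\<in>UNIV. \<pi> x * h (T x)) \<le> qq\<^sup>2 * (\<Sum>y\<in>UNIV. \<pi> y * h y)"
proof -
  have "(\<Sum>x\<in>UNIV. \<pi> x * h (T x)) = (\<Sum>y\<in>UNIV. \<Sum>x\<in>{x. x \<in> UNIV \<and> T x = y}. \<pi> x * h (T x))"
    by (rule sum.group[symmetric]) auto
  also have "\<dots> \<le> (\<Sum>y\<in>UNIV. qq\<^sup>2 * (\<pi> y * h y))"
  proof (rule sum_mono)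
    fix y
    show "(\<Sum>x\<in>{x. x \<in> UNIV \<and> T x = y}. \<pi> x * h (T x)) \<le> qq\<^sup>2 * (\<pi> y * h y)"
    proof (cases "y = xstar")
      case True
      then show ?thesis using h0 by simp
    next
      case False
      have pnu: "p powr \<nu> > 0" using p_gt by simp
      have sub: "{x. x \<in> UNIV \<and> T x = y} \<subseteq> N y"
      proof
        fix x assume "x \<in> {x. x \<in> UNIV \<and> T x = y}"
        then have Tx: "T x = y" by simp
        then have "x \<noteq> xstar" using False T_fix by auto
        then have "y \<in> N x" using T_nbhd Tx by auto
        then show "x \<in> N y" using N_sym unfolding symmetric_nbhd_def by blast
      qed
      have "(\<Sum>x\<in>{x. x \<in> UNIV \<and> T x = y}. \<pi> x) \<le> of_nat (card {x. x \<in> UNIV \<and> T x = y}) * (\<pi> y / p powr \<nu>)"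
      proof (rule sum_bounded_above)
        fix x assume "x \<in> {x. x \<in> UNIV \<and> T x = y}"
        then have Tx: "T x = y" by simp
        then have "x \<noteq> xstar" using False T_fix by auto
        then have "p powr \<nu> * \<pi> x \<le> \<pi> y" using T_incr Tx by auto
        then show "\<pi> x \<le> \<pi> y / p powr \<nu>" using pnu by (simp add: field_simps)
      qed
      also have "of_nat (card {x. x \<in> UNIV \<and> T x = y}) * (\<pi> y / p powr \<nu>) \<le> p powr \<alpha> * (\<pi> y / p powr \<nu>)"
      proof (rule mult_right_mono)
        have "card {x. x \<in> UNIV \<and> T x = y} \<le> card (N y)" by (rule card_mono[OF _ sub]) simp
        then have "real (card {x. x \<in> UNIV \<and> T x = y}) \<le> real (card (N y))" by simp
        then show "real (card {x. x \<in> UNIV \<and> T x = y}) \<le> p powr \<alpha>" using N_card[rule_format, of y] by linarith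
        show "0 \<le> \<pi> y / p powr \<nu>" using pi_pos pnu by (simp add: less_imp_le)
      qed
      also have "p powr \<alpha> * (\<pi> y / p powr \<nu>) = qq\<^sup>2 * \<pi> y" by (simp add: qq_sq)
      finally have "(\<Sum>x\<in>{x. x \<in> UNIV \<and> T x = y}. \<pi> x) * h y \<le> qq\<^sup>2 * \<pi> y * h y"
        using hnn by (simp add: mult_right_mono)
      moreover have "(\<Sum>x\<in>{x. x \<in> UNIV \<and> T x = y}. \<pi> x * h (T x)) = (\<Sum>x\<in>{x. x \<in> UNIV \<and> T x = y}. \<pi> x) * h y"
        by (simp add: sum_distrib_right)
      ultimately show ?thesis by (simp add: mult.assoc)
    qed
  qed
  also have "\<dots> = qq\<^sup>2 * (\<Sum>y\<in>UNIV. \<pi> y * h y)" by (simp add: sum_distrib_left)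
  finally show ?thesis .
qed

lemma funpow_fix: "(T ^^ i) xstar = xstar"
  by (induction i) (auto simp: T_fix)

lemma iter_bound:
  assumes gnn: "\<forall>y. g y \<ge> 0" and g0: "g xstar = 0"
  shows "(\<Sum>x\<in>UNIV. \<pi> x * g ((T ^^ i) x)) \<le> (qq\<^sup>2) ^ i * (\<Sum>y\<in>UNIV. \<pi> y * g y)"
proof (induction i)
  case 0
  then show ?case by simp
next
  case (Suc i)
  have "(\<Sum>x\<in>UNIV. \<pi> x * g ((T ^^ Suc i) x)) = (\<Sum>x\<in>UNIV. \<pi> x * (g \<circ> (T ^^ i)) (T x))"
    by (simp add: funpow_Suc_right del: funpow.simps)
  also have "\<dots> \<le> qq\<^sup>2 * (\<Sum>y\<in>UNIV. \<pi> y * (g \<circ> (T ^^ i)) y)"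
    by (rule step_bound) (use gnn g0 funpow_fix in auto)
  also have "\<dots> \<le> qq\<^sup>2 * ((qq\<^sup>2) ^ i * (\<Sum>y\<in>UNIV. \<pi> y * g y))"
    using Suc.IH by (intro mult_left_mono) auto
  finally show ?case by (simp add: mult.assoc)
qed

lemma reach: "(T ^^ CARD('x)) x = xstar"
proof (rule ccontr)
  let ?K = "CARD('x)"
  assume ne: "(T ^^ ?K) x \<noteq> xstar"
  have nz: "(T ^^ i) x \<noteq> xstar" if "i \<le> ?K" for i
  proof
    assume "(T ^^ i) x = xstar"
    then have "(T ^^ (?K - i)) ((T ^^ i) x) = xstar" using funpow_fix by simp
    then have "(T ^^ (?K - i + i)) x = xstar" by (simp add: funpow_add)
    then show False using ne that by simp
  qed
  have pnu: "p powr \<nu> > 1" using p_gt nu_gt alpha_pos by (intro gr_one_powr) auto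
  have inc: "\<pi> ((T ^^ i) x) < \<pi> ((T ^^ (i + Suc d)) x)" if "i + Suc d \<le> ?K" for i d
    using that
  proof (induction d)
    case 0
    have ne: "(T ^^ i) x \<noteq> xstar" by (rule nz) (use 0 in linarith)
    have a1: "\<pi> (T ((T ^^ i) x)) \<ge> p powr \<nu> * \<pi> ((T ^^ i) x)" using T_incr ne by blast
    have "1 * \<pi> ((T ^^ i) x) < p powr \<nu> * \<pi> ((T ^^ i) x)"
      by (rule mult_strict_right_mono[OF pnu pi_pos[rule_format]])
    then have a2: "\<pi> ((T ^^ i) x) < p powr \<nu> * \<pi> ((T ^^ i) x)" by (simp only: mult_1)
    have a3: "(T ^^ (i + Suc 0)) x = T ((T ^^ i) x)" by simp
    show ?case unfolding a3 by (rule less_le_trans[OF a2 a1])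
  next
    case (Suc d)
    have IH: "\<pi> ((T ^^ i) x) < \<pi> ((T ^^ (i + Suc d)) x)" by (rule Suc.IH) (use Suc.prems in linarith)
    have ne: "(T ^^ (i + Suc d)) x \<noteq> xstar" by (rule nz) (use Suc.prems in linarith)
    let ?y = "(T ^^ (i + Suc d)) x"
    have a1: "\<pi> (T ?y) \<ge> p powr \<nu> * \<pi> ?y" using T_incr ne by blast
    have "1 * \<pi> ?y < p powr \<nu> * \<pi> ?y"
      by (rule mult_strict_right_mono[OF pnu pi_pos[rule_format]])
    then have a2: "\<pi> ?y < p powr \<nu> * \<pi> ?y" by (simp only: mult_1)
    have a3: "(T ^^ (i + Suc (Suc d))) x = T ?y" by (simp only: add_Suc_right funpow.simps o_apply)
    show ?case unfolding a3 by (rule less_trans[OF IH less_le_trans[OF a2 a1]])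
  qed
  have "inj_on (\<lambda>i. (T ^^ i) x) {..?K}"
  proof (rule inj_onI)
    fix i j assume i: "i \<in> {..?K}" and j: "j \<in> {..?K}" and eq: "(T ^^ i) x = (T ^^ j) x"
    show "i = j"
    proof (rule ccontr)
      assume "i \<noteq> j"
      then consider "i < j" | "j < i" by linarith
      then show False
      proof cases
        case 1
        then obtain d where jd: "j = i + Suc d" using less_imp_Suc_add[OF 1] by auto
        have "\<pi> ((T ^^ i) x) < \<pi> ((T ^^ j) x)" unfolding jd by (rule inc) (use j jd in simp)
        then show False using eq by simp
      next
        case 2
        then obtain d where id: "i = j + Suc d" using less_imp_Suc_add[OF 2] by auto
        have "\<pi> ((T ^^ j) x) < \<pi> ((T ^^ i) x)" unfolding id by (rule inc) (use i id in simp)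
        then show False using eq by simp
      qed
    qed
  qed
  then have "card {..?K} \<le> card (UNIV :: 'x set)"
    by (rule card_inj_on_le) auto
  then show False by simp
qed

lemma path_bound:
  fixes f :: "'x \<Rightarrow> real"
  shows "(\<Sum>x\<in>UNIV. \<pi> x * (f x - f xstar)\<^sup>2) \<le> (\<Sum>x\<in>UNIV. \<pi> x * (f x - f (T x))\<^sup>2) / (1 - qq)\<^sup>2"
proof -
  let ?K = "CARD('x)"
  define D where "D = (\<lambda>z. f z - f (T z))"
  define g where "g = (\<lambda>z. (D z)\<^sup>2)"
  define S where "S = (\<Sum>x\<in>UNIV. \<pi> x * g x)"
  have q0: "qq > 0" and q1: "qq < 1" using qq_pos qq_lt1 .
  have gnn: "\<forall>y. g y \<ge> 0" unfolding g_def by simp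
  have g0: "g xstar = 0" unfolding g_def D_def using T_fix by simp
  have S0: "S \<ge> 0" unfolding S_def using gnn pi_pos by (auto intro!: sum_nonneg simp: less_imp_le)
  have geo: "(\<Sum>i<?K. qq ^ i) \<le> 1 / (1 - qq)"
  proof -
    have "(\<Sum>i<?K. qq ^ i) = (1 - qq ^ ?K) / (1 - qq)" using q1 by (simp add: sum_gp_strict)
    also have "\<dots> \<le> 1 / (1 - qq)" using q0 q1 by (intro divide_right_mono) auto
    finally show ?thesis .
  qed
  have pt: "(f x - f xstar)\<^sup>2 \<le> (1 / (1 - qq)) * (\<Sum>i<?K. g ((T ^^ i) x) / qq ^ i)" for x
  proof -
    have tel: "f x - f xstar = (\<Sum>i<?K. D ((T ^^ i) x))"
    proof -
      have "(\<Sum>i<?K. f ((T ^^ i) x) - f ((T ^^ Suc i) x)) = f ((T ^^ 0) x) - f ((T ^^ ?K) x)"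
        by (rule sum_lessThan_telescope')
      then show ?thesis unfolding D_def using reach[of x] by simp
    qed
    have "(\<Sum>i<?K. D ((T ^^ i) x))\<^sup>2 = (\<Sum>i<?K. sqrt (qq ^ i) * (D ((T ^^ i) x) / sqrt (qq ^ i)))\<^sup>2"
      using q0 by simp
    also have "\<dots> \<le> (\<Sum>i<?K. (sqrt (qq ^ i))\<^sup>2) * (\<Sum>i<?K. (D ((T ^^ i) x) / sqrt (qq ^ i))\<^sup>2)"
      by (rule Cauchy_Schwarz_ineq_sum)
    also have "\<dots> = (\<Sum>i<?K. qq ^ i) * (\<Sum>i<?K. g ((T ^^ i) x) / qq ^ i)"
      using q0 by (simp add: g_def power_divide)
    also have "\<dots> \<le> (1 / (1 - qq)) * (\<Sum>i<?K. g ((T ^^ i) x) / qq ^ i)"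
      using geo gnn q0 by (intro mult_right_mono sum_nonneg) auto
    finally show ?thesis using tel by simp
  qed
  have "(\<Sum>x\<in>UNIV. \<pi> x * (f x - f xstar)\<^sup>2) \<le> (\<Sum>x\<in>UNIV. \<pi> x * ((1 / (1 - qq)) * (\<Sum>i<?K. g ((T ^^ i) x) / qq ^ i)))"
    using pt pi_pos by (intro sum_mono mult_left_mono) (auto simp: less_imp_le)
  also have "\<dots> = (1 / (1 - qq)) * (\<Sum>i<?K. (\<Sum>x\<in>UNIV. \<pi> x * g ((T ^^ i) x)) / qq ^ i)"
  proof -
    have "(\<Sum>x\<in>UNIV. \<pi> x * ((1 / (1 - qq)) * (\<Sum>i<?K. g ((T ^^ i) x) / qq ^ i)))
       = (1 / (1 - qq)) * (\<Sum>x\<in>UNIV. \<Sum>i<?K. \<pi> x * g ((T ^^ i) x) / qq ^ i)"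
      by (simp add: sum_distrib_left mult_ac)
    also have "(\<Sum>x\<in>UNIV. \<Sum>i<?K. \<pi> x * g ((T ^^ i) x) / qq ^ i) = (\<Sum>i<?K. \<Sum>x\<in>UNIV. \<pi> x * g ((T ^^ i) x) / qq ^ i)"
      by (rule sum.swap)
    also have "\<dots> = (\<Sum>i<?K. (\<Sum>x\<in>UNIV. \<pi> x * g ((T ^^ i) x)) / qq ^ i)"
      by (simp add: sum_divide_distrib)
    finally show ?thesis .
  qed
  also have "\<dots> \<le> (1 / (1 - qq)) * (\<Sum>i<?K. ((qq\<^sup>2) ^ i * S) / qq ^ i)"
    using q0 q1 iter_bound[OF gnn g0] unfolding S_def
    by (intro mult_left_mono sum_mono divide_right_mono) auto
  also have "\<dots> = (1 / (1 - qq)) * ((\<Sum>i<?K. qq ^ i) * S)"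
  proof -
    have "((qq\<^sup>2) ^ i * S) / qq ^ i = qq ^ i * S" for i
    proof -
      have "(qq\<^sup>2) ^ i = qq ^ i * qq ^ i" by (simp add: power_mult_distrib[symmetric] power2_eq_square)
      then show ?thesis using q0 by simp
    qed
    then show ?thesis by (simp add: sum_distrib_right)
  qed
  also have "\<dots> \<le> (1 / (1 - qq)) * ((1 / (1 - qq)) * S)"
    using geo S0 q1 by (intro mult_left_mono mult_right_mono) auto
  also have "\<dots> = S / (1 - qq)\<^sup>2" by (simp add: power2_eq_square)
  finally show ?thesis unfolding S_def g_def D_def by simp
qed


lemma var_bound:
  fixes f :: "'x \<Rightarrow> real"
  assumes mean0: "(\<Sum>x\<in>UNIV. \<pi> x * f x) = 0"
  shows "(\<Sum>x\<in>UNIV. \<pi> x * (f x)\<^sup>2) \<le> (\<Sum>x\<in>UNIV. \<pi> x * (f x - c)\<^sup>2)"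
proof -
  have "(\<Sum>x\<in>UNIV. \<pi> x * (f x - c)\<^sup>2) = (\<Sum>x\<in>UNIV. \<pi> x * (f x)\<^sup>2 - 2 * c * (\<pi> x * f x) + c\<^sup>2 * \<pi> x)"
    by (intro sum.cong refl) (simp add: power2_eq_square algebra_simps)
  also have "\<dots> = (\<Sum>x\<in>UNIV. \<pi> x * (f x)\<^sup>2) - 2 * c * (\<Sum>x\<in>UNIV. \<pi> x * f x) + c\<^sup>2 * (\<Sum>x\<in>UNIV. \<pi> x)"
    by (simp add: sum.distrib sum_subtractf sum_distrib_left)
  finally have "(\<Sum>x\<in>UNIV. \<pi> x * (f x - c)\<^sup>2) = (\<Sum>x\<in>UNIV. \<pi> x * (f x)\<^sup>2) + c\<^sup>2 * (\<Sum>x\<in>UNIV. \<pi> x)"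
    using mean0 by simp
  moreover have "c\<^sup>2 * (\<Sum>x\<in>UNIV. \<pi> x) \<ge> 0" using pi_pos by (intro mult_nonneg_nonneg sum_nonneg) (auto simp: less_imp_le)
  ultimately show ?thesis by linarith
qed

lemma poincare_eig:
  fixes A :: "'x \<Rightarrow> 'x \<Rightarrow> real" and f :: "'x \<Rightarrow> real"
  assumes offd: "\<forall>x y. x \<noteq> y \<longrightarrow> A x y \<ge> 0" and rs: "\<forall>x. (\<Sum>y\<in>UNIV. A x y) = \<mu>"
    and rev: "reversible_wrt \<pi> A"
    and ex2: "\<exists>x. x \<noteq> xstar"
    and mean0: "(\<Sum>x\<in>UNIV. \<pi> x * f x) = 0" and fnz: "\<exists>x. f x \<noteq> 0"
    and eig: "\<forall>x. (\<Sum>y\<in>UNIV. A x y * f y) = lam * f x"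
  shows "\<mu> - lam \<ge> (1/2) * Min ((\<lambda>x. A x (T x)) ` {x. x \<noteq> xstar}) * (1 - qq)\<^sup>2"
proof -
  define m where "m = Min ((\<lambda>x. A x (T x)) ` {x. x \<noteq> xstar})"
  have TneX: "T x \<noteq> x" if "x \<noteq> xstar" for x
    using T_nbhd N_sym that unfolding symmetric_nbhd_def by metis
  have m_le: "m \<le> A x (T x)" if "x \<noteq> xstar" for x
    unfolding m_def using that by (intro Min_le) auto
  have m0: "m \<ge> 0"
    unfolding m_def using ex2 by (subst Min_ge_iff) (auto intro!: offd[rule_format] TneX[symmetric])
  define V where "V = (\<Sum>x\<in>UNIV. \<pi> x * (f x)\<^sup>2)"
  have Vpos: "V > 0"
  proof -
    obtain x0 where "f x0 \<noteq> 0" using fnz by blast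
    then have "\<pi> x0 * (f x0)\<^sup>2 > 0" using pi_pos by simp
    moreover have "\<pi> x0 * (f x0)\<^sup>2 \<le> V" unfolding V_def
      by (rule member_le_sum) (use pi_pos in \<open>auto intro!: mult_nonneg_nonneg simp: less_imp_le\<close>)
    ultimately show ?thesis by linarith
  qed
  define W where "W = (\<Sum>x\<in>UNIV. \<Sum>y\<in>UNIV. \<pi> x * A x y * (f x - f y)\<^sup>2)"
  have t1: "(\<Sum>x\<in>UNIV. \<Sum>y\<in>UNIV. \<pi> x * A x y * (f x)\<^sup>2) = \<mu> * V"
  proof -
    have "(\<Sum>x\<in>UNIV. \<Sum>y\<in>UNIV. \<pi> x * A x y * (f x)\<^sup>2) = (\<Sum>x\<in>UNIV. \<pi> x * (f x)\<^sup>2 * (\<Sum>y\<in>UNIV. A x y))"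
      by (intro sum.cong refl) (simp add: sum_distrib_left sum_distrib_right mult_ac)
    also have "\<dots> = \<mu> * V" unfolding V_def using rs by (simp add: sum_distrib_left mult_ac)
    finally show ?thesis .
  qed
  have t2: "(\<Sum>x\<in>UNIV. \<Sum>y\<in>UNIV. \<pi> x * A x y * (f x * f y)) = lam * V"
  proof -
    have "(\<Sum>x\<in>UNIV. \<Sum>y\<in>UNIV. \<pi> x * A x y * (f x * f y)) = (\<Sum>x\<in>UNIV. \<pi> x * f x * (\<Sum>y\<in>UNIV. A x y * f y))"
      by (intro sum.cong refl) (simp add: sum_distrib_left sum_distrib_right mult_ac)
    also have "\<dots> = (\<Sum>x\<in>UNIV. lam * (\<pi> x * (f x)\<^sup>2))" using eig by (simp add: power2_eq_square mult_ac)
    also have "\<dots> = lam * V" unfolding V_def by (simp add: sum_distrib_left)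
    finally show ?thesis .
  qed
  have t3: "(\<Sum>x\<in>UNIV. \<Sum>y\<in>UNIV. \<pi> x * A x y * (f y)\<^sup>2) = \<mu> * V"
  proof -
    have "(\<Sum>x\<in>UNIV. \<Sum>y\<in>UNIV. \<pi> x * A x y * (f y)\<^sup>2) = (\<Sum>x\<in>UNIV. \<Sum>y\<in>UNIV. \<pi> y * A y x * (f y)\<^sup>2)"
      using rev unfolding reversible_wrt_def by simp
    also have "\<dots> = (\<Sum>y\<in>UNIV. \<Sum>x\<in>UNIV. \<pi> y * A y x * (f y)\<^sup>2)" by (rule sum.swap)
    also have "\<dots> = \<mu> * V" by (rule t1)
    finally show ?thesis .
  qed
  have WV: "W = 2 * (\<mu> - lam) * V"
  proof -
    have "W = (\<Sum>x\<in>UNIV. \<Sum>y\<in>UNIV. \<pi> x * A x y * (f x)\<^sup>2 - 2 * (\<pi> x * A x y * (f x * f y)) + \<pi> x * A x y * (f y)\<^sup>2)"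
      unfolding W_def by (intro sum.cong refl) (simp add: power2_eq_square algebra_simps)
    also have "\<dots> = \<mu> * V - 2 * (lam * V) + \<mu> * V"
      by (simp add: sum.distrib sum_subtractf sum_distrib_left[symmetric] t1 t2 t3)
    finally show ?thesis by (simp add: algebra_simps)
  qed
  have "W \<ge> (\<Sum>x\<in>UNIV. \<pi> x * A x (T x) * (f x - f (T x))\<^sup>2)"
    unfolding W_def
  proof (intro sum_mono)
    fix x
    show "\<pi> x * A x (T x) * (f x - f (T x))\<^sup>2 \<le> (\<Sum>y\<in>UNIV. \<pi> x * A x y * (f x - f y)\<^sup>2)"
    proof (rule member_le_sum[of "T x" UNIV "\<lambda>y. \<pi> x * A x y * (f x - f y)\<^sup>2", simplified])
      fix y
      show "0 \<le> \<pi> x * A x y * (f x - f y)\<^sup>2"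
      proof (cases "x = y")
        case False
        then show ?thesis using offd pi_pos by (simp add: less_imp_le)
      qed simp
    qed
  qed
  moreover have "(\<Sum>x\<in>UNIV. \<pi> x * A x (T x) * (f x - f (T x))\<^sup>2) \<ge> m * (\<Sum>x\<in>UNIV. \<pi> x * (f x - f (T x))\<^sup>2)"
    unfolding sum_distrib_left
  proof (intro sum_mono)
    fix x
    show "m * (\<pi> x * (f x - f (T x))\<^sup>2) \<le> \<pi> x * A x (T x) * (f x - f (T x))\<^sup>2"
    proof (cases "x = xstar")
      case True
      then show ?thesis using T_fix by simp
    next
      case False
      have "m * (\<pi> x * (f x - f (T x))\<^sup>2) \<le> A x (T x) * (\<pi> x * (f x - f (T x))\<^sup>2)"
        using m_le[OF False] pi_pos by (intro mult_right_mono) (auto simp: less_imp_le)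
      then show ?thesis by (simp add: mult_ac)
    qed
  qed
  moreover have "(\<Sum>x\<in>UNIV. \<pi> x * (f x - f (T x))\<^sup>2) \<ge> (1 - qq)\<^sup>2 * V"
  proof -
    have q1: "(1 - qq)\<^sup>2 > 0" using qq_lt1 by simp
    have "V \<le> (\<Sum>x\<in>UNIV. \<pi> x * (f x - f xstar)\<^sup>2)" unfolding V_def by (rule var_bound[OF mean0])
    also have "\<dots> \<le> (\<Sum>x\<in>UNIV. \<pi> x * (f x - f (T x))\<^sup>2) / (1 - qq)\<^sup>2" by (rule path_bound)
    finally show ?thesis using q1 by (simp add: field_simps)
  qed
  ultimately have "2 * (\<mu> - lam) * V \<ge> m * ((1 - qq)\<^sup>2 * V)"
    using WV m0 by (metis (no_types, lifting) mult_left_mono order_trans)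
  then have "(2 * (\<mu> - lam)) * V \<ge> (m * (1 - qq)\<^sup>2) * V" by (simp add: mult_ac)
  then have "2 * (\<mu> - lam) \<ge> m * (1 - qq)\<^sup>2" using Vpos by (simp add: mult_le_cancel_right)
  then show ?thesis unfolding m_def by simp
qed


lemma lambda2_bound:
  fixes A :: "'x \<Rightarrow> 'x \<Rightarrow> real"
  assumes offd: "\<forall>x y. x \<noteq> y \<longrightarrow> A x y \<ge> 0" and rs: "\<forall>x. (\<Sum>y\<in>UNIV. A x y) = \<mu>"
    and rev: "reversible_wrt \<pi> A"
    and card2: "CARD('x) \<ge> 2" and pisum: "(\<Sum>x\<in>UNIV. \<pi> x) = 1"
  shows "lambda2 A \<le> \<mu> - kappa p \<alpha> \<nu> * Min ((\<lambda>x. A x (T x)) ` {x. x \<noteq> xstar})"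
proof -
  define m where "m = Min ((\<lambda>x. A x (T x)) ` {x. x \<noteq> xstar})"
  define c where "c = kappa p \<alpha> \<nu> * m"
  have ex2: "\<exists>x. x \<noteq> xstar"
  proof (rule ccontr)
    assume "\<not> (\<exists>x. x \<noteq> xstar)"
    then have "UNIV = {xstar}" by auto
    then have "CARD('x) = card {xstar}" by (rule arg_cong)
    then have "CARD('x) = 1" by simp
    then show False using card2 by simp
  qed
  have TneX: "T x \<noteq> x" if "x \<noteq> xstar" for x
    using T_nbhd N_sym that unfolding symmetric_nbhd_def by metis
  have m0: "m \<ge> 0"
    unfolding m_def using ex2 by (subst Min_ge_iff) (auto intro!: offd[rule_format] TneX[symmetric])
  have kq: "kappa p \<alpha> \<nu> = (1/2) * (1 - qq) ^ 3" unfolding kappa_def qq_def by simp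
  have q0: "qq > 0" and q1: "qq < 1" using qq_pos qq_lt1 .
  have c0: "c \<ge> 0" unfolding c_def kq using m0 q1 by simp
  have cle: "c \<le> (1/2) * m * (1 - qq)\<^sup>2"
  proof -
    have "(1 - qq) ^ 3 \<le> (1 - qq)\<^sup>2" using q0 q1 by (simp add: power_decreasing)
    then have "(1/2) * (1 - qq) ^ 3 * m \<le> (1/2) * (1 - qq)\<^sup>2 * m" using m0 by (intro mult_right_mono) auto
    then show ?thesis unfolding c_def kq by (simp add: mult_ac)
  qed
  define a where "a = - (c + 1)"
  define A' where "A' = (\<lambda>x y. A x y + a * \<pi> y)"
  have bs: "(\<Sum>y\<in>UNIV. a * \<pi> y) = a" using pisum by (simp add: sum_distrib_left[symmetric])
  have polyeq: "[:- \<mu>, 1:] * charpoly A' = [:- (\<mu> + a), 1:] * charpoly A"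
  proof (rule poly_eq_poly_eq_iff[THEN iffD1], rule ext)
    fix t
    show "poly ([:- \<mu>, 1:] * charpoly A') t = poly ([:- (\<mu> + a), 1:] * charpoly A) t"
      using det_deflate[OF rs bs, of t] unfolding A'_def by (simp add: charpoly_eval algebra_simps)
  qed
  have revA': "reversible_wrt \<pi> A'"
    using rev unfolding reversible_wrt_def A'_def by (simp add: algebra_simps)
  have nz: "charpoly A \<noteq> 0" "charpoly A' \<noteq> 0" using charpoly_nz_deg by auto
  have meq: "proots (charpoly A') + {#\<mu>#} = proots (charpoly A) + {#\<mu> + a#}"
  proof -
    have "proots ([:- \<mu>, 1:] * charpoly A') = proots ([:- (\<mu> + a), 1:] * charpoly A)" using polyeq by simp
    moreover have "proots ([:- \<mu>, 1:] * charpoly A') = proots [:- \<mu>, 1:] + proots (charpoly A')"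
      by (rule proots_mult) (use nz in auto)
    moreover have "proots ([:- (\<mu> + a), 1:] * charpoly A) = proots [:- (\<mu> + a), 1:] + proots (charpoly A)"
      by (rule proots_mult) (use nz in auto)
    moreover have "proots [:- \<mu>, 1:] = {#\<mu>#}" "proots [:- (\<mu> + a), 1:] = {#\<mu> + a#}"
      using proots_linear_factor[of "- \<mu>"] proots_linear_factor[of "- (\<mu> + a)"] by simp_all
    ultimately show ?thesis by (simp add: add.commute)
  qed
  have sizeR': "size (proots (charpoly A')) \<ge> 2"
  proof -
    have "size (proots (charpoly A')) = degree (charpoly A')"
      by (rule split_real[OF nz(2)]) (use eig_real[OF revA' pi_pos] in blast)
    then show ?thesis using charpoly_nz_deg[of A'] card2 by simp
  qed
  have R'bound: "r \<le> \<mu> - c" if "r \<in># proots (charpoly A')" for r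
  proof -
    have "poly (charpoly A') r = 0" using that nz by simp
    then obtain f where fnz: "\<exists>x. f x \<noteq> 0" and ev: "\<forall>x. (\<Sum>y\<in>UNIV. A' x y * f y) = r * f x"
      using real_eigvec by blast
    define s where "s = (\<Sum>x\<in>UNIV. \<pi> x * f x)"
    have colsum: "(\<Sum>x\<in>UNIV. \<pi> x * A x y) = \<pi> y * \<mu>" for y
    proof -
      have "(\<Sum>x\<in>UNIV. \<pi> x * A x y) = (\<Sum>x\<in>UNIV. \<pi> y * A y x)" using rev unfolding reversible_wrt_def by simp
      then show ?thesis using rs by (simp add: sum_distrib_left[symmetric])
    qed
    have Af: "(\<Sum>y\<in>UNIV. A' x y * f y) = (\<Sum>y\<in>UNIV. A x y * f y) + a * s" for x
      unfolding A'_def s_def by (simp add: algebra_simps sum.distrib sum_distrib_left)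
    have "(\<Sum>x\<in>UNIV. \<pi> x * (\<Sum>y\<in>UNIV. A' x y * f y)) = (\<mu> + a) * s"
    proof -
      have "(\<Sum>x\<in>UNIV. \<pi> x * (\<Sum>y\<in>UNIV. A' x y * f y))
          = (\<Sum>x\<in>UNIV. \<pi> x * (\<Sum>y\<in>UNIV. A x y * f y)) + (\<Sum>x\<in>UNIV. \<pi> x * (a * s))"
        unfolding Af by (simp only: distrib_left sum.distrib)
      also have "(\<Sum>x\<in>UNIV. \<pi> x * (\<Sum>y\<in>UNIV. A x y * f y)) = (\<Sum>x\<in>UNIV. \<Sum>y\<in>UNIV. \<pi> x * A x y * f y)"
        by (simp add: sum_distrib_left mult.assoc)
      also have "(\<Sum>x\<in>UNIV. \<pi> x * (a * s)) = a * s * (\<Sum>x\<in>UNIV. \<pi> x)"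
        by (simp add: sum_distrib_left mult.commute)
      also have "(\<Sum>x\<in>UNIV. \<Sum>y\<in>UNIV. \<pi> x * A x y * f y) = (\<Sum>y\<in>UNIV. \<Sum>x\<in>UNIV. \<pi> x * A x y * f y)"
        by (rule sum.swap)
      also have "\<dots> = (\<Sum>y\<in>UNIV. (\<Sum>x\<in>UNIV. \<pi> x * A x y) * f y)" by (simp add: sum_distrib_right)
      also have "\<dots> = \<mu> * s" unfolding s_def colsum by (simp add: sum_distrib_left mult_ac)
      finally show ?thesis using pisum by (simp add: algebra_simps)
    qed
    moreover have "(\<Sum>x\<in>UNIV. \<pi> x * (\<Sum>y\<in>UNIV. A' x y * f y)) = r * s"
      unfolding s_def using ev by (simp add: sum_distrib_left mult_ac)
    ultimately have rs_eq: "(r - (\<mu> + a)) * s = 0" by (simp add: algebra_simps)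
    show ?thesis
    proof (cases "r = \<mu> + a")
      case True
      then show ?thesis unfolding a_def by simp
    next
      case False
      then have s0: "s = 0" using rs_eq by simp
      have ev2: "\<forall>x. (\<Sum>y\<in>UNIV. A x y * f y) = r * f x" using ev Af s0 by simp
      have "\<mu> - r \<ge> (1/2) * m * (1 - qq)\<^sup>2"
        unfolding m_def by (rule poincare_eig[OF offd rs rev ex2 _ fnz ev2]) (use s0 s_def in simp)
      then show ?thesis using cle by simp
    qed
  qed
  have ain: "\<mu> + a \<in># proots (charpoly A')"
  proof -
    have "\<mu> + a \<in># proots (charpoly A') + {#\<mu>#}" unfolding meq by simp
    moreover have "\<mu> + a \<noteq> \<mu>" unfolding a_def using c0 by simp
    ultimately show ?thesis by simp
  qed
  define R0 where "R0 = proots (charpoly A') - {#\<mu> + a#}"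
  have R: "proots (charpoly A) = add_mset \<mu> R0"
  proof -
    have ne: "\<mu> + a \<noteq> \<mu>" unfolding a_def using c0 by simp
    have "proots (charpoly A) = (proots (charpoly A) + {#\<mu> + a#}) - {#\<mu> + a#}" by simp
    also have "\<dots> = (proots (charpoly A') + {#\<mu>#}) - {#\<mu> + a#}" using meq by simp
    also have "\<dots> = add_mset \<mu> (proots (charpoly A')) - {#\<mu> + a#}" by simp
    also have "\<dots> = add_mset \<mu> (proots (charpoly A') - {#\<mu> + a#})" using ne by (rule diff_union_swap[symmetric])
    finally show ?thesis unfolding R0_def .
  qed
  have R0b: "\<forall>r\<in>set_mset R0. r \<le> \<mu> - c"
    unfolding R0_def using R'bound by (meson in_diffD)
  have R0ne: "R0 \<noteq> {#}"
  proof -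
    have "size R0 = size (proots (charpoly A')) - 1" unfolding R0_def using ain by (simp add: size_Diff_submset)
    then show ?thesis using sizeR' by auto
  qed
  define L0 where "L0 = sorted_list_of_multiset R0"
  have L0s: "sorted L0" and L0set: "set L0 = set_mset R0" unfolding L0_def by auto
  have L0ne: "L0 \<noteq> []" using R0ne L0set by auto
  have "eigenvalues_desc A = \<mu> # rev L0"
  proof -
    have "insort \<mu> L0 = L0 @ [\<mu>]"
    proof (rule sorted_insort_is_snoc[OF L0s], intro ballI)
      fix x assume "x \<in> set L0"
      then have "x \<le> \<mu> - c" using R0b L0set by auto
      then show "x \<le> \<mu>" using c0 by linarith
    qed
    then show ?thesis unfolding eigenvalues_desc_def R L0_def by simp
  qed
  moreover have "rev L0 ! 0 = last L0" using L0ne by (simp add: rev_nth last_conv_nth)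
  ultimately have "lambda2 A = last L0" unfolding lambda2_def by simp
  also have "last L0 \<le> \<mu> - c"
  proof -
    have "last L0 \<in> set_mset R0" using L0ne L0set last_in_set by blast
    then show ?thesis using R0b by blast
  qed
  finally show ?thesis unfolding c_def m_def .
qed

end


theorem lemma3:
  fixes \<pi> :: "'x::finite \<Rightarrow> real"
    and p \<alpha> \<nu> :: real
    and N :: "'x \<Rightarrow> 'x set"
    and xstar :: 'x
    and T :: "'x \<Rightarrow> 'x"
  assumes card2: "CARD('x) \<ge> 2"
    and pi_dist: "prob_dist \<pi>"
    and pi_pos: "\<forall>x. \<pi> x > 0"
    and p_gt: "p > 1"
    and alpha_pos: "\<alpha> > 0"
    and N_sym: "symmetric_nbhd N"
    and N_card: "\<forall>x. real (card (N x)) \<le> p powr \<alpha>"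
    and nu_gt: "\<nu> > \<alpha>"
    and T_fix: "T xstar = xstar"
    and T_nbhd: "\<forall>x. x \<noteq> xstar \<longrightarrow> T x \<in> N x"
    and T_incr: "\<forall>x. x \<noteq> xstar \<longrightarrow> \<pi> (T x) \<ge> p powr \<nu> * \<pi> x"
  shows "(\<forall>P. transition_matrix P \<and> irreducible_mat P \<and> reversible_wrt \<pi> P \<longrightarrow>
            Gap_P P \<ge> kappa p \<alpha> \<nu> * Min ((\<lambda>x. P x (T x)) ` {x. x \<noteq> xstar}))
       \<and> (\<forall>Q. rate_matrix Q \<and> irreducible_mat Q \<and> reversible_wrt \<pi> Q \<longrightarrow>
            Gap_Q Q \<ge> kappa p \<alpha> \<nu> * Min ((\<lambda>x. Q x (T x)) ` {x. x \<noteq> xstar}))"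
proof -
  have pisum: "(\<Sum>x\<in>UNIV. \<pi> x) = 1" using pi_dist unfolding prob_dist_def by simp
  note LB = lambda2_bound[OF pi_pos p_gt alpha_pos N_sym N_card nu_gt T_fix T_nbhd T_incr]
  show ?thesis
  proof (intro conjI allI impI)
    fix P :: "'x \<Rightarrow> 'x \<Rightarrow> real"
    assume H: "transition_matrix P \<and> irreducible_mat P \<and> reversible_wrt \<pi> P"
    have offd: "\<forall>x y. x \<noteq> y \<longrightarrow> P x y \<ge> 0" and rs: "\<forall>x. (\<Sum>y\<in>UNIV. P x y) = 1"
      using H unfolding transition_matrix_def by auto
    have "lambda2 P \<le> 1 - kappa p \<alpha> \<nu> * Min ((\<lambda>x. P x (T x)) ` {x. x \<noteq> xstar})"
      using LB[OF offd rs _ card2 pisum] H by blast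
    then show "Gap_P P \<ge> kappa p \<alpha> \<nu> * Min ((\<lambda>x. P x (T x)) ` {x. x \<noteq> xstar})"
      unfolding Gap_P_def by linarith
  next
    fix Q :: "'x \<Rightarrow> 'x \<Rightarrow> real"
    assume H: "rate_matrix Q \<and> irreducible_mat Q \<and> reversible_wrt \<pi> Q"
    have offd: "\<forall>x y. x \<noteq> y \<longrightarrow> Q x y \<ge> 0" and rs: "\<forall>x. (\<Sum>y\<in>UNIV. Q x y) = 0"
      using H unfolding rate_matrix_def by auto
    have "lambda2 Q \<le> 0 - kappa p \<alpha> \<nu> * Min ((\<lambda>x. Q x (T x)) ` {x. x \<noteq> xstar})"
      using LB[OF offd rs _ card2 pisum] H by blast
    then show "Gap_Q Q \<ge> kappa p \<alpha> \<nu> * Min ((\<lambda>x. Q x (T x)) ` {x. x \<noteq> xstar})"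
      unfolding Gap_Q_def by linarith
  qed
qed

end
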